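(* Let $(\eta_k)_{k\ge1}$ be a sequence of real numbers and suppose there are $\varepsilon>0$, $C>0$, $D>0$, $\tilde\beta\in[0,1]$ and $k_0$ such that for all $k\ge k_0$ $$0\le\eta_k\le1-\varepsilon\quad\text{and}\quad \eta_{k+1}\le\eta_k\Big[1-\frac{C(1-\eta_k)}{k}\Big]+\frac{D}{k^{1+\tilde\beta}}.$$ Then $\limsup_{k\to\infty}\eta_k h(k)<\infty$, where $h(k)=k^{\tilde\beta}$ if $\tilde\beta<C$, $h(k)=k^{\tilde\beta}/\log k$ if $\tilde\beta=C$, and $h(k)=k^{C}$ if $\tilde\beta>C$. *)

theory Defs
  imports "HOL-Analysis.Analysis"
begin

definition rate_h :: "real \<Rightarrow> real \<Rightarrow> nat \<Rightarrow> real" where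
  "rate_h \<beta> C k =
     (if \<beta> < C then real k powr \<beta>
      else if \<beta> = C then real k powr \<beta> / ln (real k)
      else real k powr C)"

end

theory Submission
  imports Defs
begin


lemma bern_powr:
  fixes t g :: real assumes "t \<ge> 0" "0 \<le> g" "g \<le> 1"
  shows "(1+t) powr g \<le> 1 + g*t"
  using Youngs_inequality_0[of g "1-g" "1+t" 1] assms by (simp add: algebra_simps)

lemma lem_A:
  fixes x :: "nat \<Rightarrow> real" and a b :: real and K :: nat
  assumes "a > 0" "b \<ge> 0" "K \<ge> 1"
    and nn: "\<And>k. k \<ge> K \<Longrightarrow> x k \<ge> 0"
    and st: "\<And>k. k \<ge> K \<Longrightarrow> x (Suc k) \<le> (1 - a / real k) * x k + b / real k"
  shows "k \<ge> K \<Longrightarrow> x k \<le> max (x K) (b/a + b)"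
proof (induction k rule: dec_induct)
  case base then show ?case by simp
next
  case (step k)
  have kp: "real k \<ge> 1" using step.hyps assms(3) by simp
  have xk: "x k \<ge> 0" using nn step.hyps by simp
  have e: "(1 - a / real k) * x k + b / real k = x k - (a * x k - b) / real k"
    using kp by (simp add: field_simps)
  show ?case
  proof (cases "x k \<ge> b / a")
    case True
    then have "a * x k - b \<ge> 0" using assms(1) by (simp add: field_simps)
    then have "(a * x k - b) / real k \<ge> 0" using kp by simp
    then show ?thesis using st[OF step.hyps(1)] e step.IH by linarith
  next
    case False
    have "a / real k * x k \<ge> 0" using assms(1) kp xk by simp
    moreover have "b / real k \<le> b" using kp assms(2) by (simp add: divide_le_eq mult_le_cancel_left1)
    ultimately have "x (Suc k) \<le> x k + b" using st[OF step.hyps(1)] by (simp add: algebra_simps)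
    then show ?thesis using False by linarith
  qed
qed

lemma ineq_I:
  fixes s :: real and j :: nat assumes "0 < s" "s \<le> 1" "j \<ge> 1"
  shows "real j powr (-1-s) \<le> (3/s) * (real j powr (-s) - real (Suc j) powr (-s))"
proof -
  have jp: "real j \<ge> 1" using assms by simp
  have l1: "ln (1 + 1/real j) \<ge> 1 / (real j + 1)"
  proof -
    have "ln ((real j) / (real j + 1)) \<le> real j / (real j + 1) - 1"
      using jp by (intro ln_le_minus_one) simp
    moreover have "ln ((real j) / (real j + 1)) = - ln (1 + 1/real j)"
      using jp by (simp add: ln_div field_simps)
    moreover have "real j / (real j + 1) - 1 = - (1 / (real j + 1))" using jp by (simp add: field_simps)
    ultimately show ?thesis by linarith
  qed
  have p: "(1 + 1/real j) powr s \<ge> 1 + s / (real j + 1)"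
  proof -
    have "1 + 1/real j > 0" using jp by (simp add: add_pos_nonneg)
    then have "(1 + 1/real j) powr s = exp (s * ln (1 + 1/real j))" by (simp add: powr_def)
    also have "\<dots> \<ge> 1 + s * ln (1 + 1/real j)" by (rule exp_ge_add_one_self)
    finally have "(1 + 1/real j) powr s \<ge> 1 + s * ln (1 + 1/real j)" .
    moreover have "s * ln (1 + 1/real j) \<ge> s * (1 / (real j + 1))"
      using mult_left_mono[OF l1, of s] assms(1) by simp
    ultimately show ?thesis by simp
  qed
  have sj: "real (Suc j) = real j * (1 + 1/real j)" using jp by (simp add: field_simps)
  have nz0: "1/real j \<ge> 0" by simp
  have nz: "1 + 1/real j \<noteq> 0" using nz0 by linarith
  have q: "real (Suc j) powr (-s) = real j powr (-s) / (1 + 1/real j) powr s"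
  proof -
    have "real (Suc j) powr (-s) = real j powr (-s) * (1 + 1/real j) powr (-s)"
      by (subst sj) (rule powr_mult)
    then show ?thesis by (simp add: powr_minus divide_inverse)
  qed
  have pos: "(1 + 1/real j) powr s > 0" using nz by simp
  have "real (Suc j) powr (-s) \<le> real j powr (-s) / (1 + s / (real j + 1))"
    unfolding q using p jp assms(1) pos by (intro divide_left_mono) (auto intro!: mult_pos_pos add_pos_nonneg)
  also have "\<dots> = real j powr (-s) * ((real j + 1) / (real j + 1 + s))"
    using jp assms(1) by (simp add: field_simps)
  finally have A: "real j powr (-s) - real (Suc j) powr (-s) \<ge> real j powr (-s) * (s / (real j + 1 + s))"
    using jp assms(1) by (simp add: field_simps)
  have B: "s / (real j + 1 + s) \<ge> s / (3 * real j)"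
    using jp assms by (intro divide_left_mono) auto
  have C: "real j powr (-1-s) = real j powr (-s) / real j"
    using jp by (simp add: powr_diff powr_minus divide_simps powr_add)
  have "(3/s) * (real j powr (-s) - real (Suc j) powr (-s)) \<ge> (3/s) * (real j powr (-s) * (s / (3 * real j)))"
  proof -
    have "real j powr (-s) * (s / (3 * real j)) \<le> real j powr (-s) * (s / (real j + 1 + s))"
      using B by (intro mult_left_mono) auto
    then have "real j powr (-s) * (s / (3 * real j)) \<le> real j powr (-s) - real (Suc j) powr (-s)"
      using A by linarith
    then show ?thesis using assms(1) by (intro mult_left_mono) auto
  qed
  also have "(3/s) * (real j powr (-s) * (s / (3 * real j))) = real j powr (-1-s)"
    using C assms(1) jp by (simp add: field_simps)
  finally show ?thesis .
qed

lemma ineq_II: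
  fixes j :: nat assumes "j \<ge> 1"
  shows "1 / real j \<le> 2 * (ln (real (Suc j)) - ln (real j))"
proof -
  have jp: "real j \<ge> 1" using assms by simp
  have "ln (real j / real (Suc j)) \<le> real j / real (Suc j) - 1"
    using jp by (intro ln_le_minus_one) simp
  moreover have "ln (real j / real (Suc j)) = ln (real j) - ln (real (Suc j))"
    using jp by (simp add: ln_div)
  moreover have "real j / real (Suc j) - 1 = - 1 / (real j + 1)" using jp by (simp add: field_simps)
  moreover have "1 / real j \<le> 2 / (real j + 1)" using jp by (simp add: field_simps)
  ultimately show ?thesis by simp
qed



lemma sum_I:
  fixes s :: real assumes "0 < s" "s \<le> 1" "K \<ge> 1"
  shows "k \<ge> K \<Longrightarrow> (\<Sum>j\<in>{K..<k}. real j powr (-1-s)) \<le> 3/s * (real K powr (-s) - real k powr (-s))"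
proof (induction k rule: dec_induct)
  case base then show ?case by simp
next
  case (step k)
  have "(\<Sum>j\<in>{K..<Suc k}. real j powr (-1-s)) = (\<Sum>j\<in>{K..<k}. real j powr (-1-s)) + real k powr (-1-s)"
    using step.hyps by simp
  also have "\<dots> \<le> 3/s * (real K powr (-s) - real k powr (-s)) + 3/s * (real k powr (-s) - real (Suc k) powr (-s))"
    using step.IH ineq_I[OF assms(1,2), of k] step.hyps assms(3) by linarith
  finally show ?case by (simp add: algebra_simps)
qed

lemma sum_II:
  assumes "K \<ge> 1"
  shows "k \<ge> K \<Longrightarrow> (\<Sum>j\<in>{K..<k}. 1 / real j) \<le> 2 * (ln (real k) - ln (real K))"
proof (induction k rule: dec_induct)
  case base then show ?case by simp
next
  case (step k)
  have "(\<Sum>j\<in>{K..<Suc k}. 1 / real j) = (\<Sum>j\<in>{K..<k}. 1 / real j) + 1 / real k"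
    using step.hyps by simp
  also have "\<dots> \<le> 2 * (ln (real k) - ln (real K)) + 2 * (ln (real (Suc k)) - ln (real k))"
    using step.IH ineq_II[of k] step.hyps assms by linarith
  finally show ?case by (simp add: algebra_simps)
qed

lemma powr_neg_le1:
  fixes x s :: real assumes "x \<ge> 1" "s \<ge> 0" shows "x powr (-s) \<le> 1"
proof -
  have "x powr s \<ge> 1" using ge_one_powr_ge_zero assms by simp
  then show ?thesis using assms by (simp add: powr_minus divide_le_eq_1 inverse_le_1_iff)
qed

lemma lem_B:
  fixes x g :: "nat \<Rightarrow> real" and s E :: real and K :: nat
  assumes s: "0 < s" "s \<le> 1" and E: "E \<ge> 0" and K: "K \<ge> 1"
    and nn: "\<And>k. k \<ge> K \<Longrightarrow> x k \<ge> 0"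
    and gn: "\<And>k. k \<ge> K \<Longrightarrow> g k \<ge> 0"
    and st: "\<And>k. k \<ge> K \<Longrightarrow> x (Suc k) \<le> (1 + E * real k powr (-1-s)) * x k + g k"
  shows "k \<ge> K \<Longrightarrow> x k \<le> exp (3*E/s) * (x K + (\<Sum>j\<in>{K..<k}. g j))"
proof -
  define A where "A = 3*E/s"
  have A0: "A \<ge> 0" using s E by (simp add: A_def)
  define y where "y k = x k * exp (A * real k powr (-s))" for k
  have ybd: "y k \<le> y K + exp A * (\<Sum>j\<in>{K..<k}. g j)" if "k \<ge> K" for k
    using that
  proof (induction k rule: dec_induct)
    case base then show ?case by simp
  next
    case (step k)
    have kp: "real k \<ge> 1" using step.hyps K by simp
    have xk: "x k \<ge> 0" using nn step.hyps by simp
    have gk: "g k \<ge> 0" using gn step.hyps by simp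
    have e1: "E * real k powr (-1-s) + A * real (Suc k) powr (-s) \<le> A * real k powr (-s)"
    proof -
      have "E * real k powr (-1-s) \<le> E * (3/s * (real k powr (-s) - real (Suc k) powr (-s)))"
        using ineq_I[OF s, of k] kp E by (intro mult_left_mono) auto
      also have "\<dots> = A * (real k powr (-s) - real (Suc k) powr (-s))" by (simp add: A_def)
      finally show ?thesis by (simp add: algebra_simps)
    qed
    have c1: "(1 + E * real k powr (-1-s)) * exp (A * real (Suc k) powr (-s)) \<le> exp (A * real k powr (-s))"
    proof -
      have "(1 + E * real k powr (-1-s)) * exp (A * real (Suc k) powr (-s))
           \<le> exp (E * real k powr (-1-s)) * exp (A * real (Suc k) powr (-s))"
        by (intro mult_right_mono exp_ge_add_one_self) simp
      also have "\<dots> = exp (E * real k powr (-1-s) + A * real (Suc k) powr (-s))" by (simp add: exp_add)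
      also have "\<dots> \<le> exp (A * real k powr (-s))" using e1 by simp
      finally show ?thesis .
    qed
    have c2: "exp (A * real (Suc k) powr (-s)) \<le> exp A"
    proof -
      have "real (Suc k) powr (-s) \<le> 1" using s by (intro powr_neg_le1) auto
      then have "A * real (Suc k) powr (-s) \<le> A" using A0 by (simp add: mult_left_le)
      then show ?thesis by simp
    qed
    have "y (Suc k) \<le> ((1 + E * real k powr (-1-s)) * x k + g k) * exp (A * real (Suc k) powr (-s))"
      unfolding y_def using st[OF step.hyps(1)] by (intro mult_right_mono) auto
    also have "\<dots> = ((1 + E * real k powr (-1-s)) * exp (A * real (Suc k) powr (-s))) * x k
                    + g k * exp (A * real (Suc k) powr (-s))" by (simp add: algebra_simps)
    also have "\<dots> \<le> exp (A * real k powr (-s)) * x k + g k * exp A"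
      using c1 c2 xk gk by (intro add_mono mult_right_mono mult_left_mono) auto
    also have "\<dots> = y k + exp A * g k" by (simp add: y_def algebra_simps)
    also have "\<dots> \<le> y K + exp A * (\<Sum>j\<in>{K..<k}. g j) + exp A * g k" using step.IH by simp
    also have "\<dots> = y K + exp A * (\<Sum>j\<in>{K..<Suc k}. g j)" using step.hyps by (simp add: algebra_simps)
    finally show ?case .
  qed
  assume kK: "k \<ge> K"
  have "x k \<le> y k"
  proof -
    have "exp (A * real k powr (-s)) \<ge> 1" using A0 by simp
    then show ?thesis unfolding y_def using nn[OF kK] by (simp add: mult_le_cancel_left1)
  qed
  also have "\<dots> \<le> y K + exp A * (\<Sum>j\<in>{K..<k}. g j)" using ybd[OF kK] .
  also have "y K \<le> x K * exp A"
  proof -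
    have "real K powr (-s) \<le> 1" using s K by (intro powr_neg_le1) auto
    then have "A * real K powr (-s) \<le> A" using A0 by (simp add: mult_left_le)
    then show ?thesis unfolding y_def using nn[of K] by (intro mult_left_mono) auto
  qed
  finally show ?thesis by (simp add: A_def algebra_simps)
qed



lemma t1: fixes g B d :: real assumes "g > 0" "d > 0" shows "eventually (\<lambda>k. B * real k powr (-g) \<le> d) sequentially"
proof -
  have "((\<lambda>k. real k powr (-g)) \<longlongrightarrow> 0) sequentially"
    using assms by (intro tendsto_neg_powr filterlim_real_sequentially) auto
  then have "((\<lambda>k. B * real k powr (-g)) \<longlongrightarrow> 0) sequentially"
    by (rule tendsto_mult_right_zero)
  from order_tendstoD(2)[OF this assms(2)] show ?thesis by eventually_elim simp
qed

lemma t2: "eventually (\<lambda>k::nat. ln (real k) \<ge> 1) sequentially"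
proof -
  have "filterlim (\<lambda>k::nat. ln (real k)) at_top sequentially"
    by (rule filterlim_compose[OF ln_at_top filterlim_real_sequentially])
  then show ?thesis by (simp add: filterlim_at_top)
qed

lemma step_gen:
  fixes k :: nat and \<gamma> y0 y1 c d :: real
  assumes "real k \<ge> 1" "0 \<le> \<gamma>" "\<gamma> \<le> 1" "y0 \<ge> 0" "c \<ge> 0" "d \<ge> 0" "y1 \<le> y0 * c + d"
  shows "real (Suc k) powr \<gamma> * y1 \<le> (1 + \<gamma> / real k) * c * (real k powr \<gamma> * y0) + 2 * real k powr \<gamma> * d"
proof -
  have kp: "real k > 0" using assms(1) by simp
  have sj: "real (Suc k) = real k * (1 + 1/real k)" using kp by (simp add: field_simps)
  have pk: "real (Suc k) powr \<gamma> = real k powr \<gamma> * (1 + 1/real k) powr \<gamma>"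
    by (subst sj) (rule powr_mult)
  have b: "(1 + 1/real k) powr \<gamma> \<le> 1 + \<gamma> / real k"
    using bern_powr[of "1/real k" \<gamma>] assms kp by simp
  have b2: "1 + \<gamma> / real k \<le> 2" using assms kp by (simp add: divide_le_eq)
  have p1: "real (Suc k) powr \<gamma> \<le> real k powr \<gamma> * (1 + \<gamma> / real k)"
    unfolding pk using b by (intro mult_left_mono) auto
  have p2: "real (Suc k) powr \<gamma> \<le> 2 * real k powr \<gamma>"
  proof -
    have "real k powr \<gamma> * (1 + \<gamma> / real k) \<le> real k powr \<gamma> * 2"
      using b2 by (intro mult_left_mono) auto
    then show ?thesis using p1 by simp
  qed
  have "real (Suc k) powr \<gamma> * y1 \<le> real (Suc k) powr \<gamma> * (y0 * c) + real (Suc k) powr \<gamma> * d"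
  proof -
    have "real (Suc k) powr \<gamma> * y1 \<le> real (Suc k) powr \<gamma> * (y0 * c + d)"
      using assms(7) by (intro mult_left_mono) auto
    then show ?thesis by (simp add: distrib_left)
  qed
  also have "\<dots> \<le> (real k powr \<gamma> * (1 + \<gamma> / real k)) * (y0 * c) + 2 * real k powr \<gamma> * d"
    using p1 p2 assms by (intro add_mono mult_right_mono) auto
  finally show ?thesis by (simp add: algebra_simps)
qed



lemma fin_limsup:
  assumes "\<And>k. k \<ge> K \<Longrightarrow> f k \<le> M"
  shows "limsup (\<lambda>k. ereal (f k)) < \<infinity>"
proof -
  have "eventually (\<lambda>k. ereal (f k) \<le> ereal M) sequentially"
    using assms by (auto simp: eventually_sequentially)
  then have "limsup (\<lambda>k. ereal (f k)) \<le> ereal M" by (rule Limsup_bounded)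
  then show ?thesis by (rule order.strict_trans1) simp
qed

theorem mainTheorem11:
  fixes \<eta> :: "nat \<Rightarrow> real" and \<epsilon> C D \<beta> :: real and k0 :: nat
  assumes "\<epsilon> > 0" and "C > 0" and "D > 0" and "0 \<le> \<beta>" and "\<beta> \<le> 1"
    and "\<And>k. k \<ge> k0 \<Longrightarrow> 0 \<le> \<eta> k \<and> \<eta> k \<le> 1 - \<epsilon>"
    and "\<And>k. k \<ge> k0 \<Longrightarrow>
           \<eta> (Suc k) \<le> \<eta> k * (1 - C * (1 - \<eta> k) / real k) + D / real k powr (1 + \<beta>)"
  shows "limsup (\<lambda>k. ereal (\<eta> k * rate_h \<beta> C k)) < \<infinity>"
proof -
  note eps = assms(1) and Cp = assms(2) and Dp = assms(3) and b0 = assms(4) and b1 = assms(5)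
  define K0 where "K0 = max k0 (max 1 (nat \<lceil>C\<rceil>))"
  have K0: "k \<ge> k0 \<and> real k \<ge> 1 \<and> real k \<ge> C" if "k \<ge> K0" for k
  proof -
    have "nat \<lceil>C\<rceil> \<le> k" using that by (simp add: K0_def)
    then have "C \<le> real k" by linarith
    then show ?thesis using that by (simp add: K0_def)
  qed
  have eta: "0 \<le> \<eta> k" "\<eta> k \<le> 1 - \<epsilon>" if "k \<ge> K0" for k using assms(6) K0[OF that] by auto
  have rec: "\<eta> (Suc k) \<le> \<eta> k * (1 - C*(1-\<eta> k)/real k) + D / real k powr (1+\<beta>)" if "k \<ge> K0" for k
    using assms(7) K0[OF that] by auto
  have cnn: "0 \<le> 1 - C*(1-\<eta> k)/real k" if "k \<ge> K0" for k
  proof -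
    have "C*(1-\<eta> k) \<le> C" using eta[OF that] Cp by (simp add: mult_left_le)
    then have "C*(1-\<eta> k) \<le> real k" using K0[OF that] by linarith
    then show ?thesis using K0[OF that] by (simp add: divide_le_eq)
  qed
  have cle: "1 - C*(1-\<eta> k)/real k \<le> 1 - C*\<epsilon>/real k" if "k \<ge> K0" for k
  proof -
    have "C*\<epsilon> \<le> C*(1-\<eta> k)" using eta[OF that] Cp by (intro mult_left_mono) auto
    then show ?thesis using K0[OF that] by (simp add: divide_right_mono)
  qed
  have cle1: "1 - C*(1-\<eta> k)/real k \<le> 1" if "k \<ge> K0" for k
    using eta[OF that] Cp K0[OF that] eps by (simp add: divide_nonneg_nonneg)
  have dnn: "0 \<le> D / real k powr (1+\<beta>)" for k using Dp by simp
  have dterm: "real k powr g * (D / real k powr (1+\<beta>)) = D * real k powr (g - 1 - \<beta>)" if "k \<ge> K0" for k g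
    using K0[OF that] by (simp add: powr_diff field_simps)
  define g1 where "g1 = min \<beta> (C*\<epsilon>/2)"
  have g1: "0 \<le> g1" "g1 \<le> \<beta>" "g1 \<le> 1" "g1 \<le> C*\<epsilon>/2"
    using b0 b1 Cp eps by (auto simp: g1_def)
  define x1 where "x1 k = real k powr g1 * \<eta> k" for k
  have x1nn: "x1 k \<ge> 0" if "k \<ge> K0" for k using eta[OF that] by (simp add: x1_def)
  have x1step: "x1 (Suc k) \<le> (1 - (C*\<epsilon>/2)/real k) * x1 k + (2*D)/real k" if kK: "k \<ge> K0" for k
  proof -
    let ?c = "1 - C*(1-\<eta> k)/real k"
    have kp: "real k \<ge> 1" using K0[OF kK] by simp
    have S: "x1 (Suc k) \<le> (1 + g1/real k) * ?c * x1 k + 2 * real k powr g1 * (D / real k powr (1+\<beta>))"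
      using step_gen[of k g1 "\<eta> k" ?c "D / real k powr (1+\<beta>)" "\<eta> (Suc k)"] kp g1 eta[OF kK] cnn[OF kK] dnn rec[OF kK]
      by (simp add: x1_def mult.assoc)
    have c1: "(1 + g1/real k) * ?c \<le> 1 - (C*\<epsilon>/2)/real k"
    proof -
      have "(1 + g1/real k) * ?c = ?c + g1/real k * ?c" by (simp only: distrib_right mult_1_left)
      also have "\<dots> \<le> ?c + g1/real k"
        using mult_left_le[OF cle1[OF kK], of "g1/real k"] g1 kp by simp
      also have "\<dots> \<le> 1 - C*\<epsilon>/real k + (C*\<epsilon>/2)/real k"
      proof -
        have "g1/real k \<le> (C*\<epsilon>/2)/real k" using g1(4) kp by (intro divide_right_mono) auto
        then show ?thesis using cle[OF kK] by linarith
      qed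
      also have "\<dots> = 1 - (C*\<epsilon>/2)/real k" by (simp add: field_simps)
      finally show ?thesis .
    qed
    have d1: "real k powr g1 * (D / real k powr (1+\<beta>)) \<le> D / real k"
    proof -
      have "real k powr (g1 - 1 - \<beta>) \<le> real k powr (-1)"
        using kp g1 by (intro powr_mono) auto
      then have "D * real k powr (g1 - 1 - \<beta>) \<le> D * real k powr (-1)" using Dp by (intro mult_left_mono) auto
      moreover have "D * real k powr (-1) = D / real k" using kp by (simp add: powr_minus divide_inverse)
      ultimately show ?thesis using dterm[OF kK, of g1] by simp
    qed
    have "(1 + g1/real k) * ?c * x1 k \<le> (1 - (C*\<epsilon>/2)/real k) * x1 k"
      using c1 x1nn[OF kK] by (rule mult_right_mono)
    then show ?thesis using S d1 by simp
  qed
  define B1 where "B1 = max (x1 K0) ((2*D) / (C*\<epsilon>/2) + 2*D)"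
  have x1bd: "x1 k \<le> B1" if "k \<ge> K0" for k
    unfolding B1_def
    by (rule lem_A[of "C*\<epsilon>/2" "2*D" K0 x1 k]) (use eps Cp Dp K0 x1nn x1step that in auto)
  have B1nn: "B1 \<ge> 0" using x1nn[of K0] by (simp add: B1_def)
  have etabd: "\<eta> k \<le> B1 * real k powr (-g1)" if "k \<ge> K0" for k
  proof -
    have kp: "real k \<ge> 1" using K0[OF that] by simp
    have "\<eta> k = x1 k * real k powr (-g1)" using kp by (simp add: x1_def powr_minus)
    then show ?thesis using x1bd[OF that] by (simp add: mult_right_mono)
  qed
  consider (z) "\<beta> = 0" | (lt) "0 < \<beta>" "\<beta> < C" | (ge) "C \<le> \<beta>" using b0 Cp by linarith
  then show ?thesis
  proof cases
    case z
    show ?thesis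
    proof (rule fin_limsup[of K0 _ 1])
      fix k assume kK: "k \<ge> K0"
      have kp: "real k \<ge> 1" using K0[OF kK] by simp
      have "rate_h \<beta> C k = 1" using z Cp kp by (simp add: rate_h_def)
      then show "\<eta> k * rate_h \<beta> C k \<le> 1" using eta[OF kK] eps by simp
    qed
  next
    case lt
    have g1p: "g1 > 0" using lt eps Cp by (simp add: g1_def)
    define \<delta> where "\<delta> = (C - \<beta>) / (4*C)"
    have dp: "\<delta> > 0" using lt Cp by (simp add: \<delta>_def)
    obtain K2 where K2: "\<And>k. k \<ge> K2 \<Longrightarrow> B1 * real k powr (-g1) \<le> \<delta>"
      using t1[OF g1p dp, of B1] by (auto simp: eventually_sequentially)
    define K3 where "K3 = max K0 K2"
    have small: "\<eta> k \<le> \<delta>" if "k \<ge> K3" for k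
      using etabd[of k] K2[of k] that by (auto simp: K3_def)
    have K3K0: "k \<ge> K0" if "k \<ge> K3" for k using that by (simp add: K3_def)
    define x2 where "x2 k = real k powr \<beta> * \<eta> k" for k
    have x2nn: "x2 k \<ge> 0" if "k \<ge> K3" for k using eta[OF K3K0[OF that]] by (simp add: x2_def)
    have x2step: "x2 (Suc k) \<le> (1 - ((C-\<beta>)/2)/real k) * x2 k + (2*D)/real k" if kK3: "k \<ge> K3" for k
    proof -
      have kK: "k \<ge> K0" using K3K0[OF kK3] .
      let ?c = "1 - C*(1-\<eta> k)/real k"
      have kp: "real k \<ge> 1" using K0[OF kK] by simp
      have S: "x2 (Suc k) \<le> (1 + \<beta>/real k) * ?c * x2 k + 2 * real k powr \<beta> * (D / real k powr (1+\<beta>))"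
        using step_gen[of k \<beta> "\<eta> k" ?c "D / real k powr (1+\<beta>)" "\<eta> (Suc k)"] kp b0 b1 eta[OF kK] cnn[OF kK] dnn rec[OF kK]
        by (simp add: x2_def mult.assoc)
      have c1: "(1 + \<beta>/real k) * ?c \<le> 1 - ((C-\<beta>)/2)/real k"
      proof -
        have "(1 + \<beta>/real k) * ?c = ?c + \<beta>/real k * ?c" by (simp only: distrib_right mult_1_left)
        also have "\<dots> \<le> ?c + \<beta>/real k"
          using mult_left_le[OF cle1[OF kK], of "\<beta>/real k"] b0 kp by simp
        also have "\<dots> = 1 - (C - \<beta> - C * \<eta> k)/real k" using kp by (simp add: field_simps)
        also have "\<dots> \<le> 1 - ((C-\<beta>)/2)/real k"
        proof -
          have "C * \<eta> k \<le> C * \<delta>" using small[OF kK3] Cp by simp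
          also have "C * \<delta> = (C - \<beta>)/4" using Cp by (simp add: \<delta>_def)
          finally have h: "C * \<eta> k \<le> (C - \<beta>) / 4" .
          have "(C-\<beta>)/2 \<le> C - \<beta> - C * \<eta> k" using h lt by (simp add: field_simps)
          then have "((C-\<beta>)/2)/real k \<le> (C - \<beta> - C * \<eta> k)/real k"
            by (rule divide_right_mono) simp
          then show ?thesis by linarith
        qed
        finally show ?thesis .
      qed
      have d1: "real k powr \<beta> * (D / real k powr (1+\<beta>)) = D / real k"
        using dterm[OF kK, of \<beta>] kp by (simp add: powr_minus divide_inverse)
      have "(1 + \<beta>/real k) * ?c * x2 k \<le> (1 - ((C-\<beta>)/2)/real k) * x2 k"
        using c1 x2nn[OF kK3] by (rule mult_right_mono)
      then show ?thesis using S d1 by simp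
    qed
    show ?thesis
    proof (rule fin_limsup[of K3 _ "max (x2 K3) ((2*D) / ((C-\<beta>)/2) + 2*D)"])
      fix k assume kK3: "k \<ge> K3"
      have "x2 k \<le> max (x2 K3) ((2*D) / ((C-\<beta>)/2) + 2*D)"
        by (rule lem_A[of "(C-\<beta>)/2" "2*D" K3 x2 k]) (use lt Dp K0 K3K0 x2nn x2step kK3 in \<open>auto\<close>)
      moreover have "\<eta> k * rate_h \<beta> C k = x2 k" using lt by (simp add: rate_h_def x2_def)
      ultimately show "\<eta> k * rate_h \<beta> C k \<le> max (x2 K3) ((2*D) / ((C-\<beta>)/2) + 2*D)" by simp
    qed
  next
    case ge
    have g1p: "g1 > 0" using ge Cp eps by (simp add: g1_def)
    have C1: "C \<le> 1" using ge b1 by simp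
    define x3 where "x3 k = real k powr C * \<eta> k" for k
    define E where "E = C * B1"
    have E0: "E \<ge> 0" using Cp B1nn by (simp add: E_def)
    have x3nn: "x3 k \<ge> 0" if "k \<ge> K0" for k using eta[OF that] by (simp add: x3_def)
    have x3step: "x3 (Suc k) \<le> (1 + E * real k powr (-1-g1)) * x3 k + 2 * D * real k powr (C - 1 - \<beta>)"
      if kK: "k \<ge> K0" for k
    proof -
      let ?c = "1 - C*(1-\<eta> k)/real k"
      have kp: "real k \<ge> 1" using K0[OF kK] by simp
      have S: "x3 (Suc k) \<le> (1 + C/real k) * ?c * x3 k + 2 * real k powr C * (D / real k powr (1+\<beta>))"
        using step_gen[of k C "\<eta> k" ?c "D / real k powr (1+\<beta>)" "\<eta> (Suc k)"] kp Cp C1 eta[OF kK] cnn[OF kK] dnn rec[OF kK]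
        by (simp add: x3_def mult.assoc)
      have c1: "(1 + C/real k) * ?c \<le> 1 + E * real k powr (-1-g1)"
      proof -
        have "(1 + C/real k) * ?c = ?c + C/real k * ?c" by (simp only: distrib_right mult_1_left)
        also have "\<dots> \<le> ?c + C/real k"
          using mult_left_le[OF cle1[OF kK], of "C/real k"] Cp kp by simp
        also have "\<dots> = 1 + C * \<eta> k / real k" using kp by (simp add: field_simps)
        also have "\<dots> \<le> 1 + C * (B1 * real k powr (-g1)) / real k"
          using etabd[OF kK] Cp kp by (simp add: divide_right_mono)
        also have "C * (B1 * real k powr (-g1)) / real k = E * real k powr (-1-g1)"
        proof -
          have "real k powr (-1-g1) = real k powr (-g1) / real k"
            using kp by (simp add: powr_diff powr_minus divide_inverse powr_add)
          then show ?thesis by (simp add: E_def)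
        qed
        finally show ?thesis .
      qed
      have "(1 + C/real k) * ?c * x3 k \<le> (1 + E * real k powr (-1-g1)) * x3 k"
        using c1 x3nn[OF kK] by (rule mult_right_mono)
      then show ?thesis using S dterm[OF kK, of C] by (simp add: mult.assoc)
    qed
    define M0 where "M0 = exp (3*E/g1)"
    have M0: "M0 > 0" by (simp add: M0_def)
    have x3bd: "x3 k \<le> M0 * (x3 K0 + (\<Sum>j\<in>{K0..<k}. 2 * D * real j powr (C - 1 - \<beta>)))" if "k \<ge> K0" for k
      unfolding M0_def
      by (rule lem_B[of g1 E K0 x3 "\<lambda>j. 2 * D * real j powr (C - 1 - \<beta>)"])
         (use g1p g1 b1 E0 K0 x3nn x3step that Dp in auto)
    have K0p: "K0 \<ge> 1" using K0[of K0] by simp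
    show ?thesis
    proof (cases "C < \<beta>")
      case True
      define s2 where "s2 = \<beta> - C"
      have s2: "0 < s2" "s2 \<le> 1" using True Cp b1 by (auto simp: s2_def)
      have ex: "C - 1 - \<beta> = -1 - s2" by (simp add: s2_def)
      define M where "M = M0 * (x3 K0 + 2 * D * (3 / s2))"
      show ?thesis
      proof (rule fin_limsup[of K0 _ M])
        fix k assume kK: "k \<ge> K0"
        have "(\<Sum>j\<in>{K0..<k}. 2 * D * real j powr (C - 1 - \<beta>)) = 2 * D * (\<Sum>j\<in>{K0..<k}. real j powr (-1-s2))"
          by (simp add: ex sum_distrib_left)
        also have "\<dots> \<le> 2 * D * (3/s2 * (real K0 powr (-s2) - real k powr (-s2)))"
          using sum_I[OF s2 K0p kK] Dp by (intro mult_left_mono) auto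
        also have "\<dots> \<le> 2 * D * (3 / s2)"
        proof -
          have "real K0 powr (-s2) \<le> 1" using K0p s2 by (intro powr_neg_le1) auto
          then have "3/s2 * (real K0 powr (-s2) - real k powr (-s2)) \<le> 3/s2"
          proof -
            have "real K0 powr (-s2) - real k powr (-s2) \<le> 1"
              using \<open>real K0 powr (-s2) \<le> 1\<close> powr_ge_zero[of "real k" "-s2"] by linarith
            then show ?thesis using s2 by (intro mult_left_le) auto
          qed
          then show ?thesis using Dp by (intro mult_left_mono) auto
        qed
        finally have sb: "(\<Sum>j\<in>{K0..<k}. 2 * D * real j powr (C - 1 - \<beta>)) \<le> 2 * D * (3 / s2)" .
        have "M0 * (x3 K0 + (\<Sum>j\<in>{K0..<k}. 2 * D * real j powr (C - 1 - \<beta>))) \<le> M"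
          unfolding M_def using sb M0 by (intro mult_left_mono) auto
        then have "x3 k \<le> M" using x3bd[OF kK] by linarith
        moreover have "\<eta> k * rate_h \<beta> C k = x3 k" using True by (simp add: rate_h_def x3_def)
        ultimately show "\<eta> k * rate_h \<beta> C k \<le> M" by simp
      qed
    next
      case False
      then have eq: "\<beta> = C" using ge by simp
      obtain K4 where K4: "\<And>k. k \<ge> K4 \<Longrightarrow> ln (real k) \<ge> 1"
        using t2 by (auto simp: eventually_sequentially)
      define K5 where "K5 = max K0 K4"
      define M where "M = M0 * (x3 K0 + 4 * D)"
      show ?thesis
      proof (rule fin_limsup[of K5 _ M])
        fix k assume kK5: "k \<ge> K5"
        have kK: "k \<ge> K0" and lk: "ln (real k) \<ge> 1" using kK5 K4 by (auto simp: K5_def)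
        have ex: "C - 1 - \<beta> = -1" using eq by simp
        have pj: "real j powr (C - 1 - \<beta>) = 1 / real j" if "j \<in> {K0..<k}" for j
        proof -
          have "real j \<ge> 1" using that K0p by simp
          then have "real j powr (-1) = 1 / real j" by (simp add: powr_minus divide_inverse)
          then show ?thesis by (simp only: ex)
        qed
        have "(\<Sum>j\<in>{K0..<k}. 2 * D * real j powr (C - 1 - \<beta>)) = (\<Sum>j\<in>{K0..<k}. 2 * D * (1 / real j))"
          by (rule sum.cong) (simp_all only: pj)
        also have "\<dots> = 2 * D * (\<Sum>j\<in>{K0..<k}. 1 / real j)" by (rule sum_distrib_left[symmetric])
        also have "\<dots> \<le> 2 * D * (2 * (ln (real k) - ln (real K0)))"
          by (rule mult_left_mono[OF sum_II[OF K0p kK]]) (use Dp in simp)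
        also have "\<dots> \<le> 2 * D * (2 * ln (real k))"
        proof -
          have "ln (real K0) \<ge> 0" using K0p by simp
          then have "2 * (ln (real k) - ln (real K0)) \<le> 2 * ln (real k)" by (simp add: algebra_simps)
          then show ?thesis by (rule mult_left_mono) (use Dp in simp)
        qed
        also have "\<dots> = 4 * D * ln (real k)" by simp
        finally have sb: "(\<Sum>j\<in>{K0..<k}. 2 * D * real j powr (C - 1 - \<beta>)) \<le> 4 * D * ln (real k)" .
        have "M0 * (x3 K0 + (\<Sum>j\<in>{K0..<k}. 2 * D * real j powr (C - 1 - \<beta>))) \<le> M0 * (x3 K0 + 4 * D * ln (real k))"
          using sb M0 by (intro mult_left_mono) auto
        then have "x3 k \<le> M0 * (x3 K0 + 4 * D * ln (real k))" using x3bd[OF kK] by linarith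
        also have "\<dots> \<le> M0 * (x3 K0 * ln (real k) + 4 * D * ln (real k))"
        proof -
          have "x3 K0 * 1 \<le> x3 K0 * ln (real k)"
            using lk x3nn[OF order_refl] by (intro mult_left_mono) auto
          then have "x3 K0 + 4 * D * ln (real k) \<le> x3 K0 * ln (real k) + 4 * D * ln (real k)" by simp
          then show ?thesis by (rule mult_left_mono) (use M0 in simp)
        qed
        also have "\<dots> = M * ln (real k)" unfolding M_def by (simp add: ring_distribs)
        finally have xl: "x3 k \<le> M * ln (real k)" .
        have lpos: "ln (real k) > 0" using lk by simp
        have "x3 k / ln (real k) \<le> M" using xl lpos by (simp only: pos_divide_le_eq)
        moreover have "rate_h \<beta> C k = real k powr C / ln (real k)"
          using eq by (simp add: rate_h_def)
        then have "\<eta> k * rate_h \<beta> C k = x3 k / ln (real k)" by (simp add: x3_def mult.commute)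
        ultimately show "\<eta> k * rate_h \<beta> C k \<le> M" by simp
      qed
    qed
  qed
qed


end
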